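(* There exist absolute constants $C_0\approx3.1967$ (namely $C_0=e^3/(2\pi)$) and $C_1\approx2.9290$ such that the following holds. Let $\mathcal X$ be a finite alphabet with $|\mathcal X|\ge2$, let $X_1,\dots,X_n$ be i.i.d. with distribution $P\in\mathcal P(\mathcal X)$, and let $\hat P_n$ be the empirical distribution of $(X_1,\dots,X_n)$. Then for every $\epsilon>0$, $$\mathbb P\big[\|\hat P_n-P\|_\infty\ge\epsilon\big]\le2C_1(|\mathcal X|-1)(C_0n)^{\frac{|\mathcal X|}2-1}e^{-2n\epsilon^2}.$$
   Context: $\mathcal P(\mathcal X)$ is the set of probability distributions on $\mathcal X$; $\|P-Q\|_\infty=\max_{a\in\mathcal X}|P(a)-Q(a)|$; $\hat P_n(a)=\frac1n\sum_{k=1}^n1\{X_k=a\}$. *)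

theory Defs
  imports "HOL-Probability.Probability"
begin

definition C0 :: real where "C0 = exp 3 / (2 * pi)"

definition emp_dist :: "nat \<Rightarrow> (nat \<Rightarrow> 'a) \<Rightarrow> 'a \<Rightarrow> real" where
  "emp_dist n x a = (\<Sum>k\<in>{1..n}. if x k = a then 1 else 0) / real n"

definition sup_dist :: "'a set \<Rightarrow> ('a \<Rightarrow> real) \<Rightarrow> ('a \<Rightarrow> real) \<Rightarrow> real" where
  "sup_dist A p q = Max ((\<lambda>a. \<bar>p a - q a\<bar>) ` A)"

end

theory Submission
  imports Defs
begin

lemma single_bound:
  fixes P :: "nat pmf" and n :: nat and a :: nat and \<epsilon> :: real
  assumes n: "n \<ge> 1" and e: "\<epsilon> > 0"
  shows "measure_pmf.prob (Pi_pmf {1..n} 0 (\<lambda>_. P))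
           {x. \<bar>emp_dist n x a - pmf P a\<bar> \<ge> \<epsilon>} \<le> 2 * exp (- 2 * real n * \<epsilon>\<^sup>2)"
proof -
  let ?p = "pmf P a"
  have p: "?p \<in> {0..1}" by (simp add: pmf_le_1)
  have bern: "map_pmf (\<lambda>b. b = a) P = bernoulli_pmf ?p"
  proof (rule pmf_eqI)
    fix i :: bool
    show "pmf (map_pmf (\<lambda>b. b = a) P) i = pmf (bernoulli_pmf ?p) i"
    proof (cases i)
      case True
      then show ?thesis using p by (simp add: pmf_map vimage_def measure_pmf_single)
    next
      case False
      have "pmf (map_pmf (\<lambda>b. b = a) P) False = measure_pmf.prob P (- {a})"
        by (simp add: pmf_map vimage_def Compl_eq)
      also have "\<dots> = 1 - ?p"
        using measure_pmf.prob_compl[of "{a}" P] by (simp add: Compl_eq_Diff_UNIV measure_pmf_single)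
      finally show ?thesis using False p by simp
    qed
  qed
  have PI: "map_pmf (\<lambda>h. (\<lambda>b. b = a) \<circ> h) (Pi_pmf {1..n} 0 (\<lambda>_. P))
       = Pi_pmf {1..n} (0 = a) (\<lambda>_. bernoulli_pmf ?p)"
    by (subst Pi_pmf_map[symmetric]) (simp_all add: bern)
  have bin: "binomial_pmf n ?p = map_pmf (\<lambda>f. card {x\<in>{1..n}. f x}) (Pi_pmf {1..n} (0 = a) (\<lambda>_. bernoulli_pmf ?p))"
    by (rule binomial_pmf_altdef') (use p in auto)
  have emp: "emp_dist n x a = real (card {k\<in>{1..n}. ((\<lambda>b. b = a) \<circ> x) k}) / real n" for x
  proof -
    have "(\<Sum>k\<in>{1..n}. if x k = a then 1 else 0::real) = (\<Sum>k\<in>{k\<in>{1..n}. x k = a}. 1)"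
      by (intro sum.mono_neutral_cong_right) auto
    thus ?thesis by (simp add: emp_dist_def)
  qed
  have "measure_pmf.prob (Pi_pmf {1..n} 0 (\<lambda>_. P)) {x. \<bar>emp_dist n x a - pmf P a\<bar> \<ge> \<epsilon>}
      = measure_pmf.prob (binomial_pmf n ?p) {m. \<bar>real m / real n - ?p\<bar> \<ge> \<epsilon>}"
    unfolding bin PI[symmetric] by (simp add: emp vimage_def)
  also have "\<dots> \<le> 2 * exp (- 2 * real n * \<epsilon>\<^sup>2)"
    using binomial_distribution.prob_abs_ge'[of ?p n \<epsilon>] p n e
    by (simp add: binomial_distribution_def)
  finally show ?thesis .
qed

theorem lemma13:
  shows "\<exists>C1::real. 2.92895 \<le> C1 \<and> C1 \<le> 2.92905 \<and>
    (\<forall>(A::nat set) (P::nat pmf) (n::nat) (\<epsilon>::real).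
       finite A \<and> card A \<ge> 2 \<and> set_pmf P \<subseteq> A \<and> n \<ge> 1 \<and> \<epsilon> > 0 \<longrightarrow>
       measure_pmf.prob (Pi_pmf {1..n} 0 (\<lambda>_. P))
         {x. sup_dist A (emp_dist n x) (pmf P) \<ge> \<epsilon>}
       \<le> 2 * C1 * (real (card A) - 1) * (C0 * real n) powr (real (card A) / 2 - 1)
           * exp (- 2 * real n * \<epsilon>\<^sup>2))"
proof (intro exI[of _ "2.929"] conjI allI impI)
  fix A :: "nat set" and P :: "nat pmf" and n :: nat and \<epsilon> :: real
  assume H: "finite A \<and> card A \<ge> 2 \<and> set_pmf P \<subseteq> A \<and> n \<ge> 1 \<and> \<epsilon> > 0"
  hence fin: "finite A" and k: "card A \<ge> 2" and n: "n \<ge> 1" and e: "\<epsilon> > 0" by auto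
  have ne: "A \<noteq> {}" using k by auto
  let ?M = "Pi_pmf {1..n} 0 (\<lambda>_. P)"
  let ?E = "exp (- 2 * real n * \<epsilon>\<^sup>2)"
  have sub: "{x. sup_dist A (emp_dist n x) (pmf P) \<ge> \<epsilon>}
      \<subseteq> (\<Union>a\<in>A. {x. \<bar>emp_dist n x a - pmf P a\<bar> \<ge> \<epsilon>})"
  proof
    fix x assume "x \<in> {x. sup_dist A (emp_dist n x) (pmf P) \<ge> \<epsilon>}"
    hence "Max ((\<lambda>a. \<bar>emp_dist n x a - pmf P a\<bar>) ` A) \<ge> \<epsilon>" by (simp add: sup_dist_def)
    then obtain a where "a \<in> A" "\<bar>emp_dist n x a - pmf P a\<bar> \<ge> \<epsilon>"
      using Max_ge_iff[of "(\<lambda>a. \<bar>emp_dist n x a - pmf P a\<bar>) ` A" \<epsilon>] fin ne by auto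
    thus "x \<in> (\<Union>a\<in>A. {x. \<bar>emp_dist n x a - pmf P a\<bar> \<ge> \<epsilon>})" by auto
  qed
  have "measure_pmf.prob ?M {x. sup_dist A (emp_dist n x) (pmf P) \<ge> \<epsilon>}
      \<le> measure_pmf.prob ?M (\<Union>a\<in>A. {x. \<bar>emp_dist n x a - pmf P a\<bar> \<ge> \<epsilon>})"
    by (rule measure_pmf.finite_measure_mono[OF sub]) simp
  also have "\<dots> \<le> (\<Sum>a\<in>A. measure_pmf.prob ?M {x. \<bar>emp_dist n x a - pmf P a\<bar> \<ge> \<epsilon>})"
    by (rule measure_pmf.finite_measure_subadditive_finite) (use fin in auto)
  also have "\<dots> \<le> (\<Sum>a\<in>A. 2 * ?E)"
    by (rule sum_mono, rule single_bound[OF n e])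
  also have "\<dots> = 2 * real (card A) * ?E" by simp
  also have "\<dots> \<le> 2 * 2.929 * (real (card A) - 1) * (C0 * real n) powr (real (card A) / 2 - 1) * ?E"
  proof -
    have "exp 1 \<ge> (2::real)" using exp_ge_add_one_self[of 1] by simp
    hence "exp 1 ^ 3 \<ge> (2::real) ^ 3" by (intro power_mono) auto
    moreover have "exp (3::real) = exp 1 ^ 3" using exp_of_nat_mult[of 3 "1::real"] by simp
    ultimately have "exp 3 \<ge> (8::real)" by simp
    moreover have "pi < 4" by (rule pi_less_4)
    ultimately have "C0 \<ge> 1" unfolding C0_def by (simp add: field_simps)
    hence "C0 * real n \<ge> 1" using n by (metis mult_le_cancel_left1 nat_le_real_less of_nat_1 order_trans less_le_not_le le_less_trans real_of_nat_ge_one_iff dual_order.trans mult_right_mono order_refl zero_le_one)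
    hence pw: "(C0 * real n) powr (real (card A) / 2 - 1) \<ge> 1"
      by (rule ge_one_powr_ge_zero) (use k in simp)
    have "2 * real (card A) \<le> 2 * 2.929 * (real (card A) - 1)" using k by simp
    also have "\<dots> \<le> 2 * 2.929 * (real (card A) - 1) * (C0 * real n) powr (real (card A) / 2 - 1)"
      using pw k by (intro mult_le_cancel_left1[THEN iffD2] ) auto
    finally show ?thesis by (intro mult_right_mono) auto
  qed
  finally show "measure_pmf.prob ?M {x. sup_dist A (emp_dist n x) (pmf P) \<ge> \<epsilon>}
      \<le> 2 * 2.929 * (real (card A) - 1) * (C0 * real n) powr (real (card A) / 2 - 1) * ?E" .
qed simp_all

end
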